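(* Suppose $\mathbf{v}=(v_0,\dots,v_{n-1})\in\mathrm{GF}(q^m)^n$ has rank $r\ge1$. Then $\mathcal{L}=\langle\mathbf{v}\rangle^\perp$ is equivalent to the $(n-r)$-th order $\mathbf{B}$-elementary extension (for some $\mathbf{B}$) of an $(r,r-1)$ linear code over $\mathrm{GF}(q^m)$ with minimum rank distance $2$.
   Context: $q$ is a prime power. For $\mathbf{x}\in\mathrm{GF}(q^m)^N$, $\mathrm{rk}(\mathbf{x})$ is the dimension over $\mathrm{GF}(q)$ of the $\mathrm{GF}(q)$-span of its coordinates; the rank distance is $\mathrm{rk}(\mathbf{x}-\mathbf{y})$ and the minimum rank distance of a code is its minimum over pairs of distinct codewords. An $(N,K)$ linear code is a $K$-dimensional $\mathrm{GF}(q^m)$-subspace of $\mathrm{GF}(q^m)^N$. $\langle\mathbf{v}\rangle=\{a\mathbf{v}:a\in\mathrm{GF}(q^m)\}$, $S^\perp=\{\mathbf{u}:\sum_iu_is_i=0\ \forall\mathbf{s}\in S\}$. For $s\ge1$ and an $s\times r$ matrix $\mathbf{B}$ over $\mathrm{GF}(q)$, the $s$-th order $\mathbf{B}$-elementary extension of a linear code $\mathcal{C}_0\subseteq\mathrm{GF}(q^m)^r$ is $\{(c_0,\dots,c_{r+s-1})\in\mathrm{GF}(q^m)^{r+s}:(c_0,\dots,c_{r-1})-(c_r,\dots,c_{r+s-1})\mathbf{B}\in\mathcal{C}_0\}$; the $0$-th order extension is $\mathcal{C}_0$. Two codes $\mathcal{C},\mathcal{C}'\subseteq\mathrm{GF}(q^m)^n$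 are equivalent (for the rank metric) if $\mathcal{C}'=\{\mathbf{c}\mathbf{M}:\mathbf{c}\in\mathcal{C}\}$ for some invertible $n\times n$ matrix $\mathbf{M}$ over $\mathrm{GF}(q)$. *)

theory Defs
  imports Main
begin

text \<open>GF(q^m) is modelled by a finite field type 'k::field; GF(q) by a subfield F of it.
  Vectors of length N over GF(q^m) are functions nat => 'k::field vanishing from index N on.\<close>

definition subfield :: "'k::field set \<Rightarrow> bool" where
  "subfield F \<longleftrightarrow> 0 \<in> F \<and> 1 \<in> F \<and> (\<forall>x\<in>F. \<forall>y\<in>F. x + y \<in> F \<and> x * y \<in> F)
     \<and> (\<forall>x\<in>F. - x \<in> F \<and> inverse x \<in> F)"

definition vecs :: "nat \<Rightarrow> (nat \<Rightarrow> 'k::field) set" where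
  "vecs N = {v. \<forall>i\<ge>N. v i = 0}"

definition F_indep :: "'k::field set \<Rightarrow> (nat \<Rightarrow> 'k::field) \<Rightarrow> nat \<Rightarrow> bool" where
  "F_indep F e d \<longleftrightarrow>
     (\<forall>c. (\<forall>j<d. c j \<in> F) \<and> (\<Sum>j<d. c j * e j) = 0 \<longrightarrow> (\<forall>j<d. c j = 0))"

definition F_span :: "'k::field set \<Rightarrow> 'k::field set \<Rightarrow> 'k::field set" where
  "F_span F S = {x. \<exists>(d::nat) c e. (\<forall>j<d. c j \<in> F \<and> e j \<in> S) \<and> x = (\<Sum>j<d. c j * e j)}"

definition F_dim :: "'k::field set \<Rightarrow> 'k::field set \<Rightarrow> nat" where
  "F_dim F V = (THE d. \<exists>e. F_indep F e d \<and> F_span F (e ` {..<d}) = V)"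

definition rk :: "'k::field set \<Rightarrow> nat \<Rightarrow> (nat \<Rightarrow> 'k::field) \<Rightarrow> nat" where
  "rk F N x = F_dim F (F_span F (x ` {..<N}))"

definition lin_code :: "nat \<Rightarrow> nat \<Rightarrow> (nat \<Rightarrow> 'k::field) set \<Rightarrow> bool" where
  "lin_code N K C \<longleftrightarrow> (\<exists>b :: nat \<Rightarrow> nat \<Rightarrow> 'k::field.
      (\<forall>j<K. b j \<in> vecs N) \<and>
      (\<forall>a. (\<forall>i. (\<Sum>j<K. a j * b j i) = 0) \<longrightarrow> (\<forall>j<K. a j = 0)) \<and>
      C = {(\<lambda>i. \<Sum>j<K. a j * b j i) | a. True})"

text \<open>Minimum rank distance; for a code with fewer than two codewords we use the
  usual convention d = N + 1.\<close>
definition min_rank_dist :: "'k::field set \<Rightarrow> nat \<Rightarrow> (nat \<Rightarrow> 'k::field) set \<Rightarrow> nat" where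
  "min_rank_dist F N C =
     (if \<exists>x\<in>C. \<exists>y\<in>C. x \<noteq> y
      then Min {rk F N (\<lambda>i. x i - y i) | x y. x \<in> C \<and> y \<in> C \<and> x \<noteq> y}
      else N + 1)"

definition span1 :: "(nat \<Rightarrow> 'k::field) \<Rightarrow> (nat \<Rightarrow> 'k::field) set" where
  "span1 v = {(\<lambda>i. a * v i) | a. True}"

definition perp :: "nat \<Rightarrow> (nat \<Rightarrow> 'k::field) set \<Rightarrow> (nat \<Rightarrow> 'k::field) set" where
  "perp N S = {u \<in> vecs N. \<forall>s\<in>S. (\<Sum>i<N. u i * s i) = 0}"

definition elem_ext :: "nat \<Rightarrow> nat \<Rightarrow> (nat \<Rightarrow> nat \<Rightarrow> 'k::field) \<Rightarrow> (nat \<Rightarrow> 'k::field) set \<Rightarrow> (nat \<Rightarrow> 'k::field) set" where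
  "elem_ext r s B C0 =
     {c \<in> vecs (r + s).
        (\<lambda>i. if i < r then c i - (\<Sum>j<s. c (r + j) * B j i) else 0) \<in> C0}"

definition F_matrix :: "'k::field set \<Rightarrow> nat \<Rightarrow> nat \<Rightarrow> (nat \<Rightarrow> nat \<Rightarrow> 'k::field) \<Rightarrow> bool" where
  "F_matrix F a b M \<longleftrightarrow> (\<forall>i<a. \<forall>j<b. M i j \<in> F)"

definition F_invertible :: "'k::field set \<Rightarrow> nat \<Rightarrow> (nat \<Rightarrow> nat \<Rightarrow> 'k::field) \<Rightarrow> bool" where
  "F_invertible F N M \<longleftrightarrow> F_matrix F N N M \<and> (\<exists>M'. F_matrix F N N M' \<and>
     (\<forall>i<N. \<forall>j<N. (\<Sum>k<N. M i k * M' k j) = (if i = j then 1 else 0)) \<and>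
     (\<forall>i<N. \<forall>j<N. (\<Sum>k<N. M' i k * M k j) = (if i = j then 1 else 0)))"

definition vec_mat :: "nat \<Rightarrow> (nat \<Rightarrow> 'k::field) \<Rightarrow> (nat \<Rightarrow> nat \<Rightarrow> 'k::field) \<Rightarrow> (nat \<Rightarrow> 'k::field)" where
  "vec_mat N c M = (\<lambda>j. if j < N then (\<Sum>i<N. c i * M i j) else 0)"

definition rank_equivalent :: "'k::field set \<Rightarrow> nat \<Rightarrow> (nat \<Rightarrow> 'k::field) set \<Rightarrow> (nat \<Rightarrow> 'k::field) set \<Rightarrow> bool" where
  "rank_equivalent F N C C' \<longleftrightarrow>
     (\<exists>M. F_invertible F N M \<and> C' = {vec_mat N c M | c. c \<in> C})"

end

theory Submission
  imports Defs "HOL-Algebra.Embedded_Algebras"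
begin

definition RR :: "'a::field ring" where
  "RR = \<lparr> carrier = UNIV, monoid.mult = (\<lambda>x y. x * y), one = 1, ring.zero = 0, add = (\<lambda>x y. x + y) \<rparr>"

lemma RR_simps [simp]:
  "carrier RR = UNIV" "mult RR = (\<lambda>x y. x * y)" "one RR = 1" "zero RR = 0" "add RR = (\<lambda>x y. x + y)"
  by (simp_all add: RR_def)

lemma field_RR: "field (RR :: 'a::field ring)"
proof -
  have "\<exists>y. x + y = 0" for x :: 'a
    using add.right_inverse by blast
  moreover have "x \<noteq> 0 \<Longrightarrow> \<exists>y. x * y = 1" for x :: 'a
    by (rule exI[of _ "inverse x"]) auto
  ultimately show ?thesis
    unfolding RR_def by unfold_locales (auto simp: algebra_simps Units_def)
qed

interpretation RRr: field "RR :: 'a::field ring"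
  by (rule field_RR)

lemma RR_minus [simp]: "a_inv RR x = - (x::'a::field)"
  by (rule RRr.minus_equality) auto

lemma RR_inv [simp]: "(x::'a::field) \<noteq> 0 \<Longrightarrow> m_inv RR x = inverse x"
  by (rule RRr.inv_char) auto

lemma subfield_RR:
  assumes "Defs.subfield F" shows "Subrings.subfield F (RR :: 'a::field ring)"
proof (rule RRr.subfieldI')
  show "subring F (RR :: 'a ring)"
    using assms unfolding Defs.subfield_def by (intro RRr.subringI) auto
  show "\<And>k. k \<in> F - {\<zero>\<^bsub>RR\<^esub>} \<Longrightarrow> inv\<^bsub>RR\<^esub> k \<in> F"
    using assms unfolding Defs.subfield_def by auto
qed

lemma combine_sum:
  "RRr.combine Ks Us = (\<Sum>j<min (length Ks) (length Us). Ks ! j * Us ! j)"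
proof (induction Ks arbitrary: Us)
  case Nil then show ?case by simp
next
  case (Cons k Ks)
  show ?case
  proof (cases Us)
    case Nil then show ?thesis by simp
  next
    case (Cons u Us')
    then show ?thesis using Cons.IH
      by (simp add: sum.lessThan_Suc_shift del: sum.lessThan_Suc)
  qed
qed

lemma combine_sum_eq:
  "length Ks = length Us \<Longrightarrow> RRr.combine Ks Us = (\<Sum>j<length Us. Ks ! j * Us ! j)"
  by (simp add: combine_sum)

lemma span_eq:
  assumes F: "Defs.subfield F"
  shows "F_span F (set Us) = RRr.Span F (Us :: 'a::field list)"
proof
  have SF: "Subrings.subfield F (RR :: 'a ring)" by (rule subfield_RR[OF F])
  show "F_span F (set Us) \<subseteq> RRr.Span F Us"
  proof
    fix x assume "x \<in> F_span F (set Us)"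
    then obtain d :: nat and c e where ce: "\<forall>j<d. c j \<in> F \<and> e j \<in> set Us" and x: "x = (\<Sum>j<d. c j * e j)"
      unfolding F_span_def by auto
    have "(\<Sum>j<d'. c j * e j) \<in> RRr.Span F Us" if "d' \<le> d" for d'
      using that
    proof (induction d')
      case 0 then show ?case using RRr.Span_subgroup_props(2)[OF SF, of Us] by simp
    next
      case (Suc d')
      have "e d' \<in> RRr.Span F Us" using ce Suc.prems RRr.Span_base_incl[OF SF, of Us] by auto
      then have "c d' * e d' \<in> RRr.Span F Us"
        using RRr.Span_smult_closed[OF SF, of Us "c d'" "e d'"] ce Suc.prems by auto
      then show ?case using Suc RRr.Span_subgroup_props(3)[OF SF, of Us] by simp
    qed
    then show "x \<in> RRr.Span F Us" using x by simp
  qed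
  show "RRr.Span F Us \<subseteq> F_span F (set Us)"
  proof
    fix x assume "x \<in> RRr.Span F Us"
    then obtain Ks where Ks: "set Ks \<subseteq> F" "length Ks = length Us" "x = RRr.combine Ks Us"
      using RRr.Span_mem_iff_length_version[OF SF, of Us x] by auto
    then have "x = (\<Sum>j<length Us. Ks ! j * Us ! j)" by (simp add: combine_sum_eq)
    moreover have "\<forall>j<length Us. Ks ! j \<in> F \<and> Us ! j \<in> set Us" using Ks by auto
    ultimately show "x \<in> F_span F (set Us)" unfolding F_span_def by blast
  qed
qed

lemma indep_iff:
  assumes F: "Defs.subfield F"
  shows "F_indep F e d \<longleftrightarrow> RRr.independent F (map (e :: nat \<Rightarrow> 'a::field) [0..<d])"
proof
  have SF: "Subrings.subfield F (RR :: 'a ring)" by (rule subfield_RR[OF F])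
  assume I: "F_indep F e d"
  show "RRr.independent F (map e [0..<d])"
  proof (rule RRr.trivial_combine_imp_independent[OF SF])
    show "set (map e [0..<d]) \<subseteq> carrier RR" by simp
    fix Ks assume Ks: "set Ks \<subseteq> F" "RRr.combine Ks (map e [0..<d]) = \<zero>\<^bsub>RR\<^esub>"
    define c where "c j = (if j < length Ks then Ks ! j else 0)" for j
    have cF: "\<forall>j<d. c j \<in> F" using Ks(1) F unfolding c_def Defs.subfield_def by auto
    have "(\<Sum>j<d. c j * e j) = (\<Sum>j<min (length Ks) d. Ks ! j * e j)"
    proof -
      have "(\<Sum>j<d. c j * e j) = (\<Sum>j\<in>{..<min (length Ks) d}. c j * e j)"
        by (rule sum.mono_neutral_right) (auto simp: c_def)
      also have "\<dots> = (\<Sum>j<min (length Ks) d. Ks ! j * e j)"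
        by (rule sum.cong) (auto simp: c_def)
      finally show ?thesis .
    qed
    also have "\<dots> = 0" using Ks(2) by (simp add: combine_sum)
    finally have "\<forall>j<d. c j = 0" using I cF unfolding F_indep_def by blast
    then show "set (take (length (map e [0..<d])) Ks) \<subseteq> {\<zero>\<^bsub>RR\<^esub>}"
      by (auto simp: set_conv_nth c_def)
  qed
next
  have SF: "Subrings.subfield F (RR :: 'a ring)" by (rule subfield_RR[OF F])
  assume I: "RRr.independent F (map e [0..<d])"
  show "F_indep F e d"
    unfolding F_indep_def
  proof (intro allI impI)
    fix c j assume c: "(\<forall>j<d. c j \<in> F) \<and> (\<Sum>j<d. c j * e j) = 0" and j: "j < d"
    have "set (map c [0..<d]) \<subseteq> F" using c by auto
    moreover have "RRr.combine (map c [0..<d]) (map e [0..<d]) = \<zero>\<^bsub>RR\<^esub>"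
      using c by (simp add: combine_sum_eq)
    ultimately have "set (take (length (map e [0..<d])) (map c [0..<d])) \<subseteq> {\<zero>\<^bsub>RR\<^esub>}"
      using RRr.independent_imp_trivial_combine[OF SF I] by blast
    then show "c j = 0" using j by (auto simp: set_conv_nth)
  qed
qed

lemma F_dim_eq:
  assumes F: "Defs.subfield F" and I: "RRr.independent F Vs" and V: "RRr.Span F Vs = V"
  shows "F_dim F V = length (Vs :: 'a::field list)"
  unfolding F_dim_def
proof (rule the_equality)
  have SF: "Subrings.subfield F (RR :: 'a ring)" by (rule subfield_RR[OF F])
  have mv: "map ((!) Vs) [0..<length Vs] = Vs" by (simp add: map_nth)
  show "\<exists>e. F_indep F e (length Vs) \<and> F_span F (e ` {..<length Vs}) = V"
  proof (intro exI conjI)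
    show "F_indep F ((!) Vs) (length Vs)" using I mv indep_iff[OF F] by metis
    have "(!) Vs ` {..<length Vs} = set Vs" by (auto simp: set_conv_nth)
    then show "F_span F ((!) Vs ` {..<length Vs}) = V" using span_eq[OF F] V by simp
  qed
  fix d assume "\<exists>e. F_indep F e d \<and> F_span F (e ` {..<d}) = V"
  then obtain e where e: "F_indep F e d" "F_span F (e ` {..<d}) = V" by blast
  have "e ` {..<d} = set (map e [0..<d])" by auto
  moreover have "F_span F (set (map e [0..<d])) = RRr.Span F (map e [0..<d])" by (rule span_eq[OF F])
  ultimately have "RRr.Span F (map e [0..<d]) = V" using e(2) by simp
  then have "RRr.dimension (length (map e [0..<d])) F V"
    using RRr.dimensionI[OF SF] e(1) indep_iff[OF F] by blast
  moreover have "RRr.dimension (length Vs) F V" using RRr.dimensionI[OF SF I V] .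
  ultimately show "d = length Vs" using RRr.dimension_is_inj[OF SF] by fastforce
qed

lemma filter_idx:
  assumes F: "Defs.subfield F"
  shows "distinct ixs \<Longrightarrow> \<exists>js. distinct js \<and> set js \<subseteq> set ixs \<and> RRr.independent F (map (x :: nat \<Rightarrow> 'a::field) js)
            \<and> RRr.Span F (map x js) = RRr.Span F (map x ixs)"
proof (induction ixs)
  case Nil then show ?case by auto
next
  case (Cons i ixs)
  have SF: "Subrings.subfield F (RR :: 'a ring)" by (rule subfield_RR[OF F])
  from Cons obtain js where js: "distinct js" "set js \<subseteq> set ixs" "RRr.independent F (map x js)"
    "RRr.Span F (map x js) = RRr.Span F (map x ixs)" by auto
  show ?case
  proof (cases "x i \<in> RRr.Span F (map x ixs)")
    case True
    have "RRr.Span F (map x (i # ixs)) = RRr.Span F (map x ixs)"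
    proof
      show "RRr.Span F (map x (i # ixs)) \<subseteq> RRr.Span F (map x ixs)"
        using True RRr.Span_base_incl[OF SF, of "map x ixs"]
        by (intro RRr.mono_Span_subset[OF SF]) auto
      show "RRr.Span F (map x ixs) \<subseteq> RRr.Span F (map x (i # ixs))"
        using RRr.mono_Span[OF SF, of "map x ixs" "x i"] by simp
    qed
    then show ?thesis using js by auto
  next
    case False
    have "RRr.independent F (map x (i # js))"
      using False js RRr.li_Cons[of "x i" F "map x js"] by simp
    moreover have "RRr.Span F (map x (i # js)) = RRr.Span F (map x (i # ixs))"
      using js(4) by simp
    moreover have "distinct (i # js)" using js Cons.prems by auto
    ultimately show ?thesis using js(2) by (intro exI[of _ "i # js"]) auto
  qed
qed

lemma zero_notin_indep:
  assumes F: "Defs.subfield F"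
  shows "RRr.independent F Us \<Longrightarrow> (0::'a::field) \<notin> set Us"
proof (induction Us)
  case Nil then show ?case by simp
next
  case (Cons u Us)
  have SF: "Subrings.subfield F (RR :: 'a ring)" by (rule subfield_RR[OF F])
  have "\<zero>\<^bsub>RR\<^esub> \<in> RRr.Span F Us" using RRr.Span_subgroup_props(2)[OF SF, of Us] by simp
  then show ?case using Cons RRr.independent_backwards[of F u Us] by auto
qed

lemma rk_idx:
  assumes F: "Defs.subfield F"
  shows "\<exists>js. distinct js \<and> set js \<subseteq> {..<N} \<and> RRr.independent F (map (x :: nat \<Rightarrow> 'a::field) js)
            \<and> RRr.Span F (map x js) = RRr.Span F (map x [0..<N]) \<and> rk F N x = length js"
proof -
  obtain js where js: "distinct js" "set js \<subseteq> set [0..<N]" "RRr.independent F (map x js)"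
    "RRr.Span F (map x js) = RRr.Span F (map x [0..<N])"
    using filter_idx[OF F, of "[0..<N]" x] by auto
  have "x ` {..<N} = set (map x [0..<N])" by auto
  then have "F_span F (x ` {..<N}) = RRr.Span F (map x [0..<N])" using span_eq[OF F] by metis
  then have "rk F N x = length (map x js)"
    unfolding rk_def using F_dim_eq[OF F js(3)] js(4) by simp
  then show ?thesis using js by (intro exI[of _ js]) auto
qed

lemma rk_le_card:
  assumes F: "Defs.subfield F"
  shows "rk F N (x :: nat \<Rightarrow> 'a::field) \<le> card (x ` {..<N} - {0})"
proof -
  have SF: "Subrings.subfield F (RR :: 'a ring)" by (rule subfield_RR[OF F])
  obtain js where js: "distinct js" "set js \<subseteq> {..<N}" "RRr.independent F (map x js)"
     "rk F N x = length js" using rk_idx[OF F, of N x] by auto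
  have "distinct (map x js)" using RRr.independent_distinct[OF SF js(3)] .
  then have "length js = card (set (map x js))" using distinct_card[of "map x js"] by simp
  also have "\<dots> \<le> card (x ` {..<N} - {0})"
    using js(2) zero_notin_indep[OF F js(3)] by (intro card_mono) auto
  finally show ?thesis using js(4) by simp
qed

lemma rk_le:
  assumes F: "Defs.subfield F"
  shows "rk F N (x :: nat \<Rightarrow> 'a::field) \<le> N"
proof -
  obtain js where js: "distinct js" "set js \<subseteq> {..<N}" "rk F N x = length js"
    using rk_idx[OF F, of N x] by auto
  have "length js = card (set js)" using js(1) by (simp add: distinct_card)
  also have "\<dots> \<le> N" using js(2) card_mono[of "{..<N}" "set js"] by simp
  finally show ?thesis using js by simp
qed

lemma perp_span1:
  "perp N (span1 w) = {u \<in> vecs N. (\<Sum>i<N. u i * w i) = (0::'a::field)}"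
proof -
  have dist: "(\<Sum>i<N. u i * (a * w i)) = a * (\<Sum>i<N. u i * w i)" for u a
    by (simp add: sum_distrib_left algebra_simps)
  have "(\<forall>s\<in>{(\<lambda>i. a * w i) | a. True}. (\<Sum>i<N. u i * s i) = 0) \<longleftrightarrow> (\<Sum>i<N. u i * w i) = 0" for u
  proof
    assume "\<forall>s\<in>{(\<lambda>i. a * w i) | a. True}. (\<Sum>i<N. u i * s i) = 0"
    moreover have "(\<lambda>i. 1 * w i) \<in> {(\<lambda>i. a * w i) | a. True}" by blast
    ultimately show "(\<Sum>i<N. u i * w i) = 0" by (drule_tac bspec) auto
  next
    assume "(\<Sum>i<N. u i * w i) = 0"
    then show "\<forall>s\<in>{(\<lambda>i. a * w i) | a. True}. (\<Sum>i<N. u i * s i) = 0"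
      using dist by auto
  qed
  then show ?thesis
    unfolding perp_def span1_def by auto
qed

lemma rk_ge2:
  assumes F: "Defs.subfield F" and I: "F_indep F w r" and z: "z \<in> vecs r"
    and zw: "(\<Sum>i<r. z i * w i) = (0::'a::{field})" and nz: "z \<noteq> (\<lambda>i. 0)"
  shows "2 \<le> rk F r z"
proof (rule ccontr)
  assume "\<not> 2 \<le> rk F r z"
  have SF: "Subrings.subfield F (RR :: 'a ring)" by (rule subfield_RR[OF F])
  obtain js where js: "distinct js" "set js \<subseteq> {..<r}" "RRr.independent F (map z js)"
     "RRr.Span F (map z js) = RRr.Span F (map z [0..<r])" "rk F r z = length js"
    using rk_idx[OF F, of r z] by auto
  have zin: "z i \<in> RRr.Span F (map z js)" if "i < r" for i
    using RRr.Span_base_incl[OF SF, of "map z [0..<r]"] js(4) that by auto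
  have len: "length js \<le> 1" using js(5) \<open>\<not> 2 \<le> rk F r z\<close> by simp
  have "z = (\<lambda>i. 0)"
  proof (cases js)
    case Nil
    then have "z i = 0" if "i < r" for i using zin[OF that] by simp
    then show ?thesis using z unfolding vecs_def by (auto simp: not_less[symmetric])
  next
    case (Cons t rest)
    then have jst: "js = [t]" using len by simp
    define g where "g = z t"
    have g0: "g \<noteq> 0" using zero_notin_indep[OF F js(3)] jst g_def by auto
    have "\<exists>k. k \<in> F \<and> z i = k * g" if "i < r" for i
    proof -
      have "z i \<in> RRr.Span F [g]" using zin[OF that] jst g_def by simp
      then obtain Ks where Ks: "set Ks \<subseteq> F" "length Ks = 1" "z i = RRr.combine Ks [g]"
        using RRr.Span_mem_iff_length_version[OF SF, of "[g]" "z i"] by auto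
      then show ?thesis by (intro exI[of _ "Ks ! 0"]) (auto simp: combine_sum_eq)
    qed
    then obtain f where f: "\<And>i. i < r \<Longrightarrow> f i \<in> F \<and> z i = f i * g" by metis
    have "g * (\<Sum>i<r. f i * w i) = (\<Sum>i<r. z i * w i)"
      by (simp add: sum_distrib_left f algebra_simps)
    then have "(\<Sum>i<r. f i * w i) = 0" using zw g0 by simp
    then have "\<forall>i<r. f i = 0" using I f unfolding F_indep_def by blast
    then have "z i = 0" if "i < r" for i using f that by simp
    then show ?thesis using z unfolding vecs_def by (auto simp: not_less[symmetric])
  qed
  then show False using nz by simp
qed

lemma lin_code_C0:
  assumes w0: "w 0 \<noteq> (0::'a::field)"
  shows "lin_code (Suc r') r' {u \<in> vecs (Suc r'). (\<Sum>i<Suc r'. u i * w i) = 0}"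
proof -
  define b where "b j i = (if i = Suc j then w 0 else if i = 0 then - w (Suc j) else 0)" for j i
  have bS: "b j (Suc i) = (if i = j then w 0 else 0)" for i j by (auto simp: b_def)
  have b0: "b j 0 = - w (Suc j)" for j by (simp add: b_def)
  have G1: "b j \<in> vecs (Suc r')" if "j < r'" for j using that by (auto simp: vecs_def b_def)
  have G2: "a j = 0" if a: "\<forall>i. (\<Sum>j<r'. a j * b j i) = 0" and j: "j < r'" for a j
  proof -
    have "(\<Sum>j'<r'. a j' * b j' (Suc j)) = (\<Sum>j'<r'. if j = j' then a j' * w 0 else 0)"
      by (rule sum.cong) (auto simp: bS)
    also have "\<dots> = a j * w 0" using j by simp
    finally show ?thesis using a w0 by simp
  qed
  have bw: "(\<Sum>i<Suc r'. b j i * w i) = 0" if "j < r'" for j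
  proof -
    have "(\<Sum>i<r'. b j (Suc i) * w (Suc i)) = (\<Sum>i<r'. if j = i then w 0 * w (Suc i) else 0)"
      by (rule sum.cong) (auto simp: bS)
    also have "\<dots> = w 0 * w (Suc j)" using that by simp
    finally show ?thesis by (simp add: sum.lessThan_Suc_shift b0 del: sum.lessThan_Suc)
  qed
  have G3: "{u \<in> vecs (Suc r'). (\<Sum>i<Suc r'. u i * w i) = 0} = {\<lambda>i. \<Sum>j<r'. a j * b j i |a. True}"
  proof (rule Set.set_eqI, rule iffI)
    fix u assume "u \<in> {u \<in> vecs (Suc r'). (\<Sum>i<Suc r'. u i * w i) = 0}"
    then have uv: "u \<in> vecs (Suc r')" and uw: "(\<Sum>i<Suc r'. u i * w i) = 0" by auto
    define a where "a j = u (Suc j) / w 0" for j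
    have "u i = (\<Sum>j<r'. a j * b j i)" for i
    proof (cases i)
      case 0
      have "(\<Sum>j<r'. a j * b j 0) = - (\<Sum>j<r'. u (Suc j) * w (Suc j)) / w 0"
        by (simp add: a_def b0 sum_divide_distrib sum_negf[symmetric])
      also have "(\<Sum>j<r'. u (Suc j) * w (Suc j)) = - (u 0 * w 0)"
        using uw by (simp add: sum.lessThan_Suc_shift del: sum.lessThan_Suc) (simp add: algebra_simps eq_neg_iff_add_eq_0)
      finally show ?thesis using 0 w0 by simp
    next
      case (Suc i')
      show ?thesis
      proof (cases "i' < r'")
        case True
        have "(\<Sum>j<r'. a j * b j (Suc i')) = (\<Sum>j<r'. if i' = j then a j * w 0 else 0)"
          by (rule sum.cong) (auto simp: bS)
        also have "\<dots> = u (Suc i')" using True w0 by (simp add: a_def)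
        finally show ?thesis using Suc by simp
      next
        case False
        then have "u i = 0" using uv Suc by (auto simp: vecs_def)
        moreover have "(\<Sum>j<r'. a j * b j (Suc i')) = 0" using False by (intro sum.neutral) (auto simp: bS)
        ultimately show ?thesis using Suc by simp
      qed
    qed
    then show "u \<in> {\<lambda>i. \<Sum>j<r'. a j * b j i |a. True}" by blast
  next
    fix u assume "u \<in> {\<lambda>i. \<Sum>j<r'. a j * b j i |a. True}"
    then obtain a where u: "u = (\<lambda>i. \<Sum>j<r'. a j * b j i)" by blast
    have "u \<in> vecs (Suc r')" unfolding u vecs_def by (auto simp: b_def)
    moreover have "(\<Sum>i<Suc r'. u i * w i) = (\<Sum>j<r'. a j * (\<Sum>i<Suc r'. b j i * w i))"
    proof -
      have "(\<Sum>i<Suc r'. u i * w i) = (\<Sum>i<Suc r'. \<Sum>j<r'. a j * (b j i * w i))"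
        unfolding u by (simp add: sum_distrib_right mult.assoc)
      also have "\<dots> = (\<Sum>j<r'. \<Sum>i<Suc r'. a j * (b j i * w i))" by (rule sum.swap)
      also have "\<dots> = (\<Sum>j<r'. a j * (\<Sum>i<Suc r'. b j i * w i))" by (simp only: sum_distrib_left)
      finally show ?thesis .
    qed
    moreover have "\<dots> = 0" using bw by simp
    ultimately show "u \<in> {u \<in> vecs (Suc r'). (\<Sum>i<Suc r'. u i * w i) = 0}" by simp
  qed
  show ?thesis unfolding lin_code_def using G1 G2 G3 by blast
qed

lemma indep_w0:
  assumes F: "Defs.subfield F" and I: "F_indep F w (Suc r')"
  shows "w 0 \<noteq> (0::'a::field)"
proof
  assume w0: "w 0 = 0"
  define c where "c j = (if j = 0 then 1 else (0::'a))" for j :: nat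
  have "\<forall>j<Suc r'. c j \<in> F" using F unfolding c_def Defs.subfield_def by auto
  moreover have "(\<Sum>j<Suc r'. c j * w j) = 0"
    by (rule sum.neutral) (auto simp: c_def w0)
  ultimately have "c 0 = 0" using I unfolding F_indep_def by blast
  then show False by (simp add: c_def)
qed

lemma min_dist_C0:
  assumes F: "Defs.subfield F" and I: "F_indep F w (Suc r')"
  shows "min_rank_dist F (Suc r') {u \<in> vecs (Suc r'). (\<Sum>i<Suc r'. u i * w i) = (0::'a::field)} = 2"
proof -
  define C where "C = {u \<in> vecs (Suc r'). (\<Sum>i<Suc r'. u i * w i) = (0::'a::field)}"
  have w0: "w 0 \<noteq> 0" using indep_w0[OF F I] .
  have diffC: "(\<lambda>i. x i - y i) \<in> C" if "x \<in> C" "y \<in> C" for x y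
    using that unfolding C_def vecs_def by (auto simp: left_diff_distrib sum_subtractf simp del: sum.lessThan_Suc)
  show ?thesis
  proof (cases r')
    case 0
    have "u = (\<lambda>i. 0)" if "u \<in> C" for u
    proof
      fix i show "u i = 0"
        using that w0 0 unfolding C_def vecs_def by (cases i) auto
    qed
    then have "\<not> (\<exists>x\<in>C. \<exists>y\<in>C. x \<noteq> y)" by blast
    then show ?thesis unfolding min_rank_dist_def C_def[symmetric] using 0 by simp
  next
    case (Suc r'')
    define S where "S = {rk F (Suc r') (\<lambda>i. x i - y i) | x y. x \<in> C \<and> y \<in> C \<and> x \<noteq> y}"
    define x where "x i = (if i = 1 then w 0 else if i = 0 then - w 1 else 0)" for i :: nat
    have xw: "x i * w i = (if i = 1 then w 0 * w 1 else 0) + (if i = 0 then - (w 1 * w 0) else 0)" for i :: nat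
      by (auto simp: x_def)
    have "(\<Sum>i<Suc r'. x i * w i) = 0" unfolding xw sum.distrib using Suc by simp
    then have xC: "x \<in> C" unfolding C_def vecs_def using Suc by (auto simp: x_def)
    have zC: "(\<lambda>i. 0) \<in> C" unfolding C_def vecs_def by simp
    have xnz: "x \<noteq> (\<lambda>i. 0)"
    proof
      assume "x = (\<lambda>i. 0)"
      then have "x 1 = 0" by simp
      then show False using w0 by (simp add: x_def)
    qed
    have ge2: "2 \<le> rk F (Suc r') z" if "z \<in> C" "z \<noteq> (\<lambda>i. 0)" for z
      using rk_ge2[OF F I, of z] that unfolding C_def by auto
    have "rk F (Suc r') x \<le> card (x ` {..<Suc r'} - {0})" by (rule rk_le_card[OF F])
    also have "\<dots> \<le> card {w 0, - w 1}"
      by (rule card_mono) (auto simp: x_def)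
    also have "\<dots> \<le> 2" by (simp add: card_insert_if)
    finally have x2: "rk F (Suc r') x = 2" using ge2[OF xC xnz] by simp
    have "2 \<in> S" unfolding S_def using xC zC xnz x2 by force
    moreover have "finite S"
      by (rule finite_subset[of _ "{..Suc r'}"]) (auto simp: S_def rk_le[OF F])
    moreover have "2 \<le> s" if "s \<in> S" for s
    proof -
      obtain x' y' where "s = rk F (Suc r') (\<lambda>i. x' i - y' i)" "x' \<in> C" "y' \<in> C" "x' \<noteq> y'"
        using \<open>s \<in> S\<close> unfolding S_def by blast
      moreover have "(\<lambda>i. x' i - y' i) \<noteq> (\<lambda>i. 0)"
      proof
        assume "(\<lambda>i. x' i - y' i) = (\<lambda>i. 0)"
        then have "x' = y'" by (metis eq_iff_diff_eq_0 ext)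
        then show False using \<open>x' \<noteq> y'\<close> by simp
      qed
      ultimately show ?thesis using ge2 diffC by auto
    qed
    ultimately have "Min S = 2" by (intro Min_eqI) auto
    moreover have "\<exists>x\<in>C. \<exists>y\<in>C. x \<noteq> y" using xC zC xnz by blast
    ultimately show ?thesis unfolding min_rank_dist_def C_def[symmetric] S_def by simp
  qed
qed

lemma sum_split_add:
  "(\<Sum>i<r + s. f i) = (\<Sum>i<r. f i) + (\<Sum>j<s. f (r + j)) " for f :: "nat \<Rightarrow> 'a::comm_monoid_add"
  by (induction s) (simp_all add: add.assoc)

theorem corollary1:
  fixes F :: "'k::{field,finite} set" and v :: "nat \<Rightarrow> 'k" and n r :: nat
  assumes "Defs.subfield F"
    and "v \<in> vecs n"
    and "rk F n v = r"
    and "r \<ge> 1"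
  shows "\<exists>B C0. F_matrix F (n - r) r B \<and> lin_code r (r - 1) C0
           \<and> min_rank_dist F r C0 = 2
           \<and> rank_equivalent F n (perp n (span1 v)) (elem_ext r (n - r) B C0)"
proof -
  have F: "Defs.subfield F" using assms(1) .
  have SF: "Subrings.subfield F (RR :: 'k ring)" by (rule subfield_RR[OF F])
  have F0: "0 \<in> F" and F1: "1 \<in> F" and Fneg: "\<And>x. x \<in> F \<Longrightarrow> - x \<in> F"
    using F unfolding Defs.subfield_def by auto
  obtain js where js: "distinct js" "set js \<subseteq> {..<n}" "RRr.independent F (map v js)"
     "RRr.Span F (map v js) = RRr.Span F (map v [0..<n])" "rk F n v = length js"
    using rk_idx[OF F, of n v] by auto
  have rjs: "r = length js" using js(5) assms(3) by simp
  have rn: "r \<le> n"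
  proof -
    have "length js = card (set js)" using js(1) by (simp add: distinct_card)
    also have "\<dots> \<le> n" using js(2) card_mono[of "{..<n}" "set js"] by simp
    finally show ?thesis using rjs by simp
  qed
  define L where "L = js @ filter (\<lambda>i. i \<notin> set js) [0..<n]"
  have Ld: "distinct L" using js(1) unfolding L_def by simp blast
  have Ls: "set L = {..<n}" using js(2) by (auto simp: L_def)
  have Ll: "length L = n" using distinct_card[OF Ld] Ls by simp
  define p where "p = (!) L"
  have pb: "bij_betw p {..<n} {..<n}" unfolding p_def using bij_betw_nth[OF Ld] Ll Ls by simp
  have pjs: "p k = js ! k" if "k < r" for k using that rjs by (simp add: p_def L_def nth_append)
  have pn: "p i < n" if "i < n" for i using pb that by (auto simp: bij_betw_def)
  define q where "q = inv_into {..<n} p"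
  have qp: "q (p j) = j" if "j < n" for j
    unfolding q_def using bij_betw_inv_into_left[OF pb] that by simp
  define w where "w i = v (p i)" for i
  have mapw: "map w [0..<r] = map v js"
  proof (rule nth_equalityI)
    show "length (map w [0..<r]) = length (map v js)" using rjs by simp
    fix k assume "k < length (map w [0..<r])"
    then have k: "k < r" by simp
    then show "map w [0..<r] ! k = map v js ! k" using rjs by (simp add: w_def pjs)
  qed
  have "F_indep F w r \<longleftrightarrow> RRr.independent F (map w [0..<r])" by (rule indep_iff[OF F])
  then have Iw: "F_indep F w r" using mapw js(3) by simp
  obtain r' where r': "r = Suc r'" using assms(4) by (cases r) auto
  define C0 where "C0 = perp r (span1 w)"
  have C0eq: "C0 = {u \<in> vecs r. (\<Sum>i<r. u i * w i) = 0}" unfolding C0_def perp_span1 ..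
  have lc: "lin_code r (r - 1) C0"
    unfolding C0eq r' using lin_code_C0[of w r', OF indep_w0[OF F Iw[unfolded r']]] by simp
  have md: "min_rank_dist F r C0 = 2"
    unfolding C0eq r' using min_dist_C0[OF F Iw[unfolded r']] by simp
  have "\<exists>a. (\<forall>k<r. a k \<in> F) \<and> v i = (\<Sum>k<r. a k * w k)" if "i < n" for i
  proof -
    have "v i \<in> RRr.Span F (map v js)"
      using js(4) RRr.Span_base_incl[OF SF, of "map v [0..<n]"] that by auto
    then obtain Ks where Ks: "set Ks \<subseteq> F" "length Ks = length js" "v i = RRr.combine Ks (map v js)"
      using RRr.Span_mem_iff_length_version[OF SF, of "map v js" "v i"] by auto
    have "v i = (\<Sum>k<r. Ks ! k * w k)"
      using Ks rjs by (simp add: combine_sum_eq w_def pjs)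
    moreover have "\<forall>k<r. Ks ! k \<in> F" using Ks rjs by auto
    ultimately show ?thesis by blast
  qed
  then have ex: "\<forall>j. \<exists>a. j < n - r \<longrightarrow> (\<forall>k<r. a k \<in> F) \<and> w (r + j) = (\<Sum>k<r. a k * w k)"
  proof -
    assume H: "\<And>i. i < n \<Longrightarrow> \<exists>a. (\<forall>k<r. a k \<in> F) \<and> v i = (\<Sum>k<r. a k * w k)"
    show ?thesis
    proof
      fix j
      show "\<exists>a. j < n - r \<longrightarrow> (\<forall>k<r. a k \<in> F) \<and> w (r + j) = (\<Sum>k<r. a k * w k)"
      proof (cases "j < n - r")
        case True
        then have "p (r + j) < n" using pn by simp
        from H[OF this] show ?thesis unfolding w_def by blast
      qed simp
    qed
  qed
  from choice[OF ex] obtain A where A: "\<And>j. j < n - r \<Longrightarrow> (\<forall>k<r. A j k \<in> F) \<and> w (r + j) = (\<Sum>k<r. A j k * w k)"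
    by blast
  define B where "B j k = - A j k" for j k
  have FB: "F_matrix F (n - r) r B" unfolding F_matrix_def B_def using A Fneg by blast
  define W where "W = {c \<in> vecs n. (\<Sum>i<n. c i * w i) = 0}"
  have E1: "elem_ext r (n - r) B C0 = W"
  proof (rule Set.set_eqI)
    fix c
    define g where "g = (\<lambda>i. if i < r then c i - (\<Sum>j<n - r. c (r + j) * B j i) else 0)"
    have "(\<Sum>i<r. g i * w i) = (\<Sum>i<r. c i * w i) + (\<Sum>i<r. \<Sum>j<n - r. c (r + j) * (A j i * w i))"
      by (simp add: g_def B_def algebra_simps sum.distrib sum_distrib_right sum_distrib_left sum_negf)
    also have "(\<Sum>i<r. \<Sum>j<n - r. c (r + j) * (A j i * w i)) = (\<Sum>j<n - r. c (r + j) * w (r + j))"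
    proof -
      have "(\<Sum>i<r. \<Sum>j<n - r. c (r + j) * (A j i * w i)) = (\<Sum>j<n - r. \<Sum>i<r. c (r + j) * (A j i * w i))"
        by (rule sum.swap)
      also have "\<dots> = (\<Sum>j<n - r. c (r + j) * w (r + j))"
        by (rule sum.cong) (simp_all add: A sum_distrib_left)
      finally show ?thesis .
    qed
    also have "(\<Sum>i<r. c i * w i) + (\<Sum>j<n - r. c (r + j) * w (r + j)) = (\<Sum>i<n. c i * w i)"
      using sum_split_add[of "\<lambda>i. c i * w i" r "n - r"] rn by simp
    finally have gs: "(\<Sum>i<r. g i * w i) = (\<Sum>i<n. c i * w i)" .
    have gs': "(\<Sum>i<r. (c i - (\<Sum>j<n - r. c (r + j) * B j i)) * w i) = (\<Sum>i<n. c i * w i)"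
      using gs by (simp add: g_def)
    show "c \<in> elem_ext r (n - r) B C0 \<longleftrightarrow> c \<in> W"
      unfolding elem_ext_def W_def C0eq using gs' rn by (simp add: vecs_def)
  qed
  define M where "M i j = (if i = p j then 1 else (0::'k))" for i j
  define M' where "M' i j = (if j = p i then 1 else (0::'k))" for i j
  have vm: "vec_mat n c M = (\<lambda>j. if j < n then c (p j) else 0)" for c
  proof
    fix j show "vec_mat n c M j = (if j < n then c (p j) else 0)"
    proof (cases "j < n")
      case True
      have "(\<Sum>i<n. c i * M i j) = (\<Sum>i<n. if p j = i then c i else 0)"
        by (rule sum.cong) (auto simp: M_def)
      also have "\<dots> = c (p j)" using pn[OF True] by simp
      finally show ?thesis using True by (simp add: vec_mat_def)
    qed (simp add: vec_mat_def)
  qed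
  have reidx: "(\<Sum>j<n. f (p j)) = (\<Sum>i<n. f i)" for f :: "nat \<Rightarrow> 'k"
    using sum.reindex_bij_betw[OF pb, of f] .
  have pv: "perp n (span1 v) = {c \<in> vecs n. (\<Sum>i<n. c i * v i) = 0}" by (rule perp_span1)
  have E2: "{vec_mat n c M | c. c \<in> perp n (span1 v)} = W"
  proof (rule Set.set_eqI, rule iffI)
    fix c' assume "c' \<in> {vec_mat n c M | c. c \<in> perp n (span1 v)}"
    then obtain c where c: "c \<in> vecs n" "(\<Sum>i<n. c i * v i) = 0" and c': "c' = vec_mat n c M"
      unfolding pv by blast
    have "(\<Sum>j<n. c' j * w j) = (\<Sum>j<n. c (p j) * v (p j))"
      by (rule sum.cong) (simp_all add: c' vm w_def)
    also have "\<dots> = 0" using reidx[of "\<lambda>i. c i * v i"] c(2) by simp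
    finally show "c' \<in> W" unfolding W_def by (simp add: c' vm vecs_def)
  next
    fix c' assume "c' \<in> W"
    then have c': "c' \<in> vecs n" "(\<Sum>j<n. c' j * w j) = 0" unfolding W_def by auto
    define c where "c i = (if i < n then c' (q i) else 0)" for i
    have "vec_mat n c M = c'"
    proof
      fix j show "vec_mat n c M j = c' j"
        using c'(1) by (auto simp: vm c_def qp pn vecs_def)
    qed
    moreover have "(\<Sum>i<n. c i * v i) = 0"
    proof -
      have "(\<Sum>i<n. c i * v i) = (\<Sum>j<n. c (p j) * v (p j))" using reidx[of "\<lambda>i. c i * v i"] by simp
      also have "\<dots> = (\<Sum>j<n. c' j * w j)"
        by (rule sum.cong) (simp_all add: c_def pn qp w_def)
      finally show ?thesis using c'(2) by simp
    qed
    moreover have "c \<in> vecs n" by (simp add: vecs_def c_def)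
    ultimately show "c' \<in> {vec_mat n c M | c. c \<in> perp n (span1 v)}" unfolding pv by blast
  qed
  have inv: "F_invertible F n M"
    unfolding F_invertible_def
  proof (intro conjI exI)
    show "F_matrix F n n M" "F_matrix F n n M'"
      unfolding F_matrix_def M_def M'_def using F0 F1 by auto
    show "\<forall>i<n. \<forall>j<n. (\<Sum>k<n. M i k * M' k j) = (if i = j then 1 else 0)"
    proof (intro allI impI)
      fix i j assume ij: "i < n" "j < n"
      have "(\<Sum>k<n. M i k * M' k j) = (\<Sum>k<n. (\<lambda>t. if i = t then (if j = t then 1 else 0) else (0::'k)) (p k))"
        by (rule sum.cong) (auto simp: M_def M'_def)
      also have "\<dots> = (\<Sum>t<n. if i = t then (if j = t then 1 else 0) else (0::'k))" by (rule reidx)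
      also have "\<dots> = (if i = j then 1 else 0)" using ij by auto
      finally show "(\<Sum>k<n. M i k * M' k j) = (if i = j then 1 else 0)" .
    qed
    show "\<forall>i<n. \<forall>j<n. (\<Sum>k<n. M' i k * M k j) = (if i = j then 1 else 0)"
    proof (intro allI impI)
      fix i j assume ij: "i < n" "j < n"
      have "(\<Sum>k<n. M' i k * M k j) = (\<Sum>k<n. if p i = k then (if p j = p i then 1 else 0) else (0::'k))"
        by (rule sum.cong) (auto simp: M_def M'_def)
      also have "\<dots> = (if p j = p i then 1 else 0)" using pn[OF ij(1)] by simp
      also have "\<dots> = (if i = j then 1 else 0)"
        using pb ij by (auto simp: bij_betw_def inj_on_def)
      finally show "(\<Sum>k<n. M' i k * M k j) = (if i = j then 1 else 0)" .
    qed
  qed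
  have "rank_equivalent F n (perp n (span1 v)) (elem_ext r (n - r) B C0)"
    unfolding rank_equivalent_def by (intro exI[of _ M] conjI inv) (simp only: E1 E2)
  then show ?thesis using FB lc md by blast
qed

end
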